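(* Let $\Lambda$ be a basic finite dimensional algebra over an algebraically closed field and let $\rho,\rho':(\mathfrak{S}_{n+1},\le)\to\operatorname{s\tau-tilt}\Lambda$ be poset isomorphisms. If $\rho(s_i)=\rho'(s_i)$ for every $i\in\{1,\dots,n\}$, then $\rho=\rho'$.
   Context: $s_i=(i,i+1)$; left weak order: $w\le w'$ iff $w'=s_{i_k}\cdots s_{i_1}w$ with $\ell(w')=\ell(w)+k$, $\ell$ the Coxeter length. $\operatorname{s\tau-tilt}\Lambda$: isoclasses of basic support $\tau$-tilting right $\Lambda$-modules ordered by $M\ge M'$ iff $\operatorname{Fac}M\supseteq\operatorname{Fac}M'$. *)

theory Defs
  imports "HOL-Combinatorics.Combinatorics"
begin

definition Sym :: "nat \<Rightarrow> (nat \<Rightarrow> nat) set" where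
  "Sym n = {w. w permutes {1..Suc n}}"

definition sref :: "nat \<Rightarrow> nat \<Rightarrow> nat" where
  "sref i = transpose i (Suc i)"

fun wprod :: "nat list \<Rightarrow> nat \<Rightarrow> nat" where
  "wprod [] = id"
| "wprod (i # is) = sref i \<circ> wprod is"

definition coxeter_length :: "nat \<Rightarrow> (nat \<Rightarrow> nat) \<Rightarrow> nat" where
  "coxeter_length n w =
     (LEAST k. \<exists>is. set is \<subseteq> {1..n} \<and> length is = k \<and> wprod is = w)"

definition left_weak :: "nat \<Rightarrow> (nat \<Rightarrow> nat) \<Rightarrow> (nat \<Rightarrow> nat) \<Rightarrow> bool" where
  "left_weak n w w' \<longleftrightarrow>
     (\<exists>is. set is \<subseteq> {1..n} \<and> w' = wprod is \<circ> w \<and>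
           coxeter_length n w' = coxeter_length n w + length is)"

definition partial_order_on' :: "'b set \<Rightarrow> ('b \<Rightarrow> 'b \<Rightarrow> bool) \<Rightarrow> bool" where
  "partial_order_on' P le \<longleftrightarrow>
     (\<forall>x\<in>P. le x x) \<and>
     (\<forall>x\<in>P. \<forall>y\<in>P. le x y \<and> le y x \<longrightarrow> x = y) \<and>
     (\<forall>x\<in>P. \<forall>y\<in>P. \<forall>z\<in>P. le x y \<and> le y z \<longrightarrow> le x z)"

definition weak_order_iso :: "nat \<Rightarrow> 'b set \<Rightarrow> ('b \<Rightarrow> 'b \<Rightarrow> bool) \<Rightarrow> ((nat \<Rightarrow> nat) \<Rightarrow> 'b) \<Rightarrow> bool" where
  "weak_order_iso n P le \<rho> \<longleftrightarrow>
     bij_betw \<rho> (Sym n) P \<and>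
     (\<forall>w\<in>Sym n. \<forall>w'\<in>Sym n. left_weak n w w' \<longleftrightarrow> le (\<rho> w) (\<rho> w'))"

end

theory Submission
  imports Defs
begin


definition Prs :: "nat \<Rightarrow> nat \<Rightarrow> (nat \<times> nat) set" where
  "Prs a b = {(x,y). a \<le> x \<and> x < y \<and> y \<le> b}"

definition bic :: "(nat \<times> nat) set \<Rightarrow> bool" where
  "bic X \<longleftrightarrow> (\<forall>x y z. (x,y)\<in>X \<longrightarrow> (y,z)\<in>X \<longrightarrow> (x,z)\<in>X) \<and>
     (\<forall>x y z. (x,z)\<in>X \<longrightarrow> x<y \<longrightarrow> y<z \<longrightarrow> (x,y)\<in>X \<or> (y,z)\<in>X)"

definition BB :: "nat \<Rightarrow> nat \<Rightarrow> (nat \<times> nat) set set" where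
  "BB a b = {X. X \<subseteq> Prs a b \<and> bic X}"

lemma finite_Prs: "finite (Prs a b)"
proof -
  have "Prs a b \<subseteq> {a..b} \<times> {a..b}" by (auto simp: Prs_def)
  thus ?thesis by (rule finite_subset) auto
qed

lemma finite_BB: "finite (BB a b)"
proof -
  have "BB a b \<subseteq> Pow (Prs a b)" by (auto simp: BB_def)
  thus ?thesis using finite_Prs by (meson finite_Pow_iff finite_subset)
qed

lemma Prs_BB: "Prs a b \<in> BB a b"
  by (auto simp: BB_def bic_def Prs_def)

lemma inter_BB:
  assumes "X \<in> BB a b" shows "X \<inter> Prs a' b' \<in> BB a' b'"
proof -
  have c: "bic X" using assms by (simp add: BB_def)
  have "bic (X \<inter> Prs a' b')"
    unfolding bic_def
  proof (intro conjI allI impI)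
    fix x y z assume "(x, y) \<in> X \<inter> Prs a' b'" "(y, z) \<in> X \<inter> Prs a' b'"
    then show "(x, z) \<in> X \<inter> Prs a' b'" using c unfolding bic_def Prs_def by auto
  next
    fix x y z assume h: "(x, z) \<in> X \<inter> Prs a' b'" "x < y" "y < z"
    then have "(x,y) \<in> X \<or> (y,z) \<in> X" using c unfolding bic_def by blast
    moreover have "(x,y) \<in> Prs a' b'" "(y,z) \<in> Prs a' b'" using h unfolding Prs_def by auto
    ultimately show "(x, y) \<in> X \<inter> Prs a' b' \<or> (y, z) \<in> X \<inter> Prs a' b'" by blast
  qed
  then show ?thesis by (simp add: BB_def)
qed

lemma sub_BB: "a \<le> a' \<Longrightarrow> b' \<le> b \<Longrightarrow> BB a' b' \<subseteq> BB a b"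
  unfolding BB_def Prs_def by auto

lemma closure_Prs:
  assumes "bic X" "\<forall>i. a \<le> i \<longrightarrow> i < b \<longrightarrow> (i, Suc i) \<in> X"
  shows "Prs a b \<subseteq> X"
proof -
  have "\<forall>x. a \<le> x \<longrightarrow> x < y \<longrightarrow> y \<le> b \<longrightarrow> (x,y) \<in> X" for y
  proof (induction y)
    case 0 then show ?case by simp
  next
    case (Suc y)
    show ?case
    proof (intro allI impI)
      fix x assume h: "a \<le> x" "x < Suc y" "Suc y \<le> b"
      show "(x, Suc y) \<in> X"
      proof (cases "x = y")
        case True then show ?thesis using assms(2) h by auto
      next
        case False
        then have "(x,y) \<in> X" using Suc.IH h by auto
        moreover have "(y, Suc y) \<in> X" using assms(2) h by auto
        ultimately show ?thesis using assms(1) unfolding bic_def by blast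
      qed
    qed
  qed
  thus ?thesis unfolding Prs_def by auto
qed



lemma oiso_cmp:
  fixes F :: "'d set set"
  assumes fin0: "finite F" and bij: "bij_betw \<Phi> F F" and ord: "\<forall>X\<in>F. \<forall>Y\<in>F. X \<subseteq> Y \<longleftrightarrow> \<Phi> X \<subseteq> \<Phi> Y"
    and XF: "X \<in> F" and cmp: "\<Phi> X \<subseteq> X \<or> X \<subseteq> \<Phi> X"
  shows "\<Phi> X = X"
proof -
  define D where "D Y = {Z\<in>F. Z \<subseteq> Y}" for Y
  have mapF: "\<Phi> Y \<in> F" if "Y \<in> F" for Y using bij that by (meson bij_betwE)
  have PX: "\<Phi> X \<in> F" using mapF XF .
  have img: "\<Phi> ` D X = D (\<Phi> X)"
  proof
    show "\<Phi> ` D X \<subseteq> D (\<Phi> X)"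
    proof
      fix Z assume "Z \<in> \<Phi> ` D X"
      then obtain Y where "Y \<in> F" "Y \<subseteq> X" "Z = \<Phi> Y" by (auto simp: D_def)
      moreover have "\<Phi> Y \<subseteq> \<Phi> X" using ord XF \<open>Y \<in> F\<close> \<open>Y \<subseteq> X\<close> by simp
      ultimately show "Z \<in> D (\<Phi> X)" using mapF by (simp add: D_def)
    qed
    show "D (\<Phi> X) \<subseteq> \<Phi> ` D X"
    proof
      fix Z assume "Z \<in> D (\<Phi> X)"
      then have Z: "Z \<in> F" "Z \<subseteq> \<Phi> X" by (auto simp: D_def)
      have "Z \<in> \<Phi> ` F" using Z(1) bij by (simp add: bij_betw_def)
      then obtain Y where Y: "Y \<in> F" "Z = \<Phi> Y" by blast
      then have "Y \<subseteq> X" using Z ord XF by simp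
      then show "Z \<in> \<Phi> ` D X" using Y by (auto simp: D_def)
    qed
  qed
  have inj: "inj_on \<Phi> (D X)"
  proof -
    have "inj_on \<Phi> F" using bij by (simp add: bij_betw_def)
    moreover have "D X \<subseteq> F" by (auto simp: D_def)
    ultimately show ?thesis by (rule inj_on_subset)
  qed
  have cd: "card (D (\<Phi> X)) = card (D X)" using card_image[OF inj] img by simp
  have fin: "finite (D Y)" for Y using fin0 by (simp add: D_def)
  show ?thesis using cmp
  proof
    assume a: "\<Phi> X \<subseteq> X"
    then have "D (\<Phi> X) \<subseteq> D X" by (auto simp: D_def)
    then have "D (\<Phi> X) = D X" using cd fin by (simp add: card_subset_eq)
    moreover have "X \<in> D X" using XF by (simp add: D_def)
    ultimately have "X \<in> D (\<Phi> X)" by simp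
    then show ?thesis using a by (simp add: D_def)
  next
    assume a: "X \<subseteq> \<Phi> X"
    then have "D X \<subseteq> D (\<Phi> X)" by (auto simp: D_def)
    then have "D (\<Phi> X) = D X" using cd fin card_subset_eq[of "D (\<Phi> X)" "D X"] by simp
    moreover have "\<Phi> X \<in> D (\<Phi> X)" using PX by (simp add: D_def)
    ultimately have "\<Phi> X \<in> D X" by simp
    then show ?thesis using a by (simp add: D_def)
  qed
qed

definition fixat :: "nat \<Rightarrow> nat \<Rightarrow> ((nat\<times>nat) set \<Rightarrow> (nat\<times>nat) set) \<Rightarrow> bool" where
  "fixat a b \<Phi> \<longleftrightarrow> (\<forall>i. a \<le> i \<longrightarrow> i < b \<longrightarrow> \<Phi> {(i, Suc i)} = {(i, Suc i)})"

definition good :: "nat \<Rightarrow> nat \<Rightarrow> ((nat\<times>nat) set \<Rightarrow> (nat\<times>nat) set) \<Rightarrow> bool" where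
  "good a b \<Phi> \<longleftrightarrow> bij_betw \<Phi> (BB a b) (BB a b) \<and>
     (\<forall>X\<in>BB a b. \<forall>Y\<in>BB a b. X \<subseteq> Y \<longleftrightarrow> \<Phi> X \<subseteq> \<Phi> Y) \<and> fixat a b \<Phi>"

lemma atom_BB: "a \<le> i \<Longrightarrow> i < b \<Longrightarrow> {(i, Suc i)} \<in> BB a b"
  by (auto simp: BB_def bic_def Prs_def)

lemma good_cmp: "good a b \<Phi> \<Longrightarrow> X \<in> BB a b \<Longrightarrow> \<Phi> X \<subseteq> X \<or> X \<subseteq> \<Phi> X \<Longrightarrow> \<Phi> X = X"
  unfolding good_def by (rule oiso_cmp[OF finite_BB]) auto

lemma restrict:
  assumes g: "good a b \<Phi>" and ab: "a \<le> a'" "b' \<le> b"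
    and IH: "\<forall>\<Psi>. good a' b' \<Psi> \<longrightarrow> (\<forall>Y\<in>BB a' b'. \<Psi> Y = Y)"
    and X: "X \<in> BB a b"
  shows "\<Phi> X \<inter> Prs a' b' = X \<inter> Prs a' b'"
proof -
  let ?M = "Prs a' b'"
  have bij: "bij_betw \<Phi> (BB a b) (BB a b)" and ord: "\<forall>X\<in>BB a b. \<forall>Y\<in>BB a b. X \<subseteq> Y \<longleftrightarrow> \<Phi> X \<subseteq> \<Phi> Y"
    and fx: "fixat a b \<Phi>" using g by (auto simp: good_def)
  have MB: "?M \<in> BB a b" using Prs_BB sub_BB[OF ab] by blast
  have PM: "\<Phi> ?M \<in> BB a b" using MB bij by (meson bij_betwE)
  have "?M \<subseteq> \<Phi> ?M"
  proof (rule closure_Prs)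
    show "bic (\<Phi> ?M)" using PM by (auto simp: BB_def)
    show "\<forall>i. a' \<le> i \<longrightarrow> i < b' \<longrightarrow> (i, Suc i) \<in> \<Phi> ?M"
    proof (intro allI impI)
      fix i assume i: "a' \<le> i" "i < b'"
      have A: "{(i, Suc i)} \<in> BB a b" using i ab by (intro atom_BB) auto
      have "{(i, Suc i)} \<subseteq> ?M" using i by (auto simp: Prs_def)
      then have "\<Phi> {(i, Suc i)} \<subseteq> \<Phi> ?M" using ord[rule_format, OF A MB, THEN iffD1] \<open>{(i, Suc i)} \<subseteq> ?M\<close> by blast
      moreover have "\<Phi> {(i, Suc i)} = {(i, Suc i)}" using fx i ab by (auto simp: fixat_def)
      ultimately show "(i, Suc i) \<in> \<Phi> ?M" by auto
    qed
  qed
  then have PMM: "\<Phi> ?M = ?M" using good_cmp[OF g MB] by blast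
  have sub: "BB a' b' = {Y \<in> BB a b. Y \<subseteq> ?M}"
    using sub_BB[OF ab] by (auto simp: BB_def)
  have into: "\<Phi> Y \<in> BB a' b'" if "Y \<in> BB a' b'" for Y
  proof -
    have "Y \<in> BB a b" "Y \<subseteq> ?M" using that sub by auto
    then have "\<Phi> Y \<subseteq> \<Phi> ?M" "\<Phi> Y \<in> BB a b" using ord MB bij by (simp, meson bij_betwE)
    then show ?thesis using sub PMM by auto
  qed
  have pre: "\<exists>Y\<in>BB a' b'. \<Phi> Y = Z" if "Z \<in> BB a' b'" for Z
  proof -
    have Z: "Z \<in> BB a b" "Z \<subseteq> ?M" using that sub by auto
    then obtain Y where Y: "Y \<in> BB a b" "\<Phi> Y = Z" using bij by (metis bij_betw_imp_surj_on imageE)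
    then have "Y \<subseteq> ?M" using ord[rule_format, OF Y(1) MB, THEN iffD2] PMM Z Y(2) by blast
    then show ?thesis using Y sub by auto
  qed
  have "good a' b' \<Phi>"
    unfolding good_def
  proof (intro conjI)
    show "bij_betw \<Phi> (BB a' b') (BB a' b')"
      unfolding bij_betw_def
    proof
      show "inj_on \<Phi> (BB a' b')" using bij sub_BB[OF ab] unfolding bij_betw_def by (auto intro: inj_on_subset)
      show "\<Phi> ` BB a' b' = BB a' b'" using into pre by blast
    qed
    show "\<forall>X\<in>BB a' b'. \<forall>Y\<in>BB a' b'. X \<subseteq> Y \<longleftrightarrow> \<Phi> X \<subseteq> \<Phi> Y" using ord sub_BB[OF ab] by (simp add: subset_iff)
    show "fixat a' b' \<Phi>" using fx ab by (auto simp: fixat_def)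
  qed
  then have idr: "\<forall>Y\<in>BB a' b'. \<Phi> Y = Y" using IH by blast
  have XM: "X \<inter> ?M \<in> BB a' b'" using inter_BB X by blast
  have XMb: "X \<inter> ?M \<in> BB a b" using XM sub by auto
  have PX: "\<Phi> X \<in> BB a b" using X bij by (meson bij_betwE)
  have "X \<inter> ?M \<subseteq> \<Phi> X"
  proof -
    have "\<Phi> (X \<inter> ?M) \<subseteq> \<Phi> X" using ord[rule_format, OF XMb X, THEN iffD1] by blast
    then show ?thesis using idr XM by auto
  qed
  moreover have "\<Phi> X \<inter> ?M \<subseteq> X"
  proof -
    have "\<Phi> X \<inter> ?M \<in> BB a' b'" using inter_BB PX by blast
    then obtain Y where Y: "Y \<in> BB a' b'" "\<Phi> Y = \<Phi> X \<inter> ?M" using pre by blast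
    have Yb: "Y \<in> BB a b" using Y sub by auto
    have "Y \<subseteq> X" using ord[rule_format, OF Yb X, THEN iffD2] Y(2) by blast
    then show ?thesis using idr Y by auto
  qed
  ultimately show ?thesis by blast
qed

theorem rigid: "good a b \<Phi> \<Longrightarrow> X \<in> BB a b \<Longrightarrow> \<Phi> X = X"
proof (induction "b - a" arbitrary: a b \<Phi> X rule: less_induct)
  case less
  have PX: "\<Phi> X \<in> BB a b" using less.prems unfolding good_def by (meson bij_betwE)
  have agree: "\<Phi> X - {(a,b)} = X - {(a,b)}"
  proof (cases "b \<le> Suc a")
    case True
    then have "Prs a b \<subseteq> {(a,b)}" by (auto simp: Prs_def)
    then show ?thesis using PX less.prems(2) by (auto simp: BB_def)
  next
    case False
    have r1: "\<Phi> X \<inter> Prs a (b - 1) = X \<inter> Prs a (b - 1)"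
      by (rule restrict[OF less.prems(1) _ _ _ less.prems(2)]) (use less.hyps[of "b - 1" a] False in auto)
    have r2: "\<Phi> X \<inter> Prs (Suc a) b = X \<inter> Prs (Suc a) b"
      by (rule restrict[OF less.prems(1) _ _ _ less.prems(2)]) (use less.hyps[of b "Suc a"] False in auto)
    have "Prs a b - {(a,b)} \<subseteq> Prs a (b - 1) \<union> Prs (Suc a) b" by (auto simp: Prs_def)
    moreover have "\<Phi> X \<subseteq> Prs a b" "X \<subseteq> Prs a b" using PX less.prems(2) by (auto simp: BB_def)
    ultimately show ?thesis using r1 r2 by blast
  qed
  then have "\<Phi> X \<subseteq> X \<or> X \<subseteq> \<Phi> X" by blast
  then show ?case using good_cmp less.prems by blast
qed



definition Tn :: "nat \<Rightarrow> (nat \<Rightarrow> nat) \<Rightarrow> (nat \<times> nat) set" where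
  "Tn n w = {(x,y). 1 \<le> x \<and> x < y \<and> y \<le> Suc n \<and> w y < w x}"

lemma Tn_Prs: "Tn n w \<subseteq> Prs 1 (Suc n)"
  by (auto simp: Tn_def Prs_def)

lemma finite_Tn: "finite (Tn n w)"
  using Tn_Prs finite_Prs by (rule finite_subset)

lemma sref_perm: "i \<in> {1..n} \<Longrightarrow> sref i permutes {1..Suc n}"
  unfolding sref_def by (rule permutes_swap_id) auto

lemma wprod_perm: "set is \<subseteq> {1..n} \<Longrightarrow> wprod is permutes {1..Suc n}"
proof (induction "is")
  case Nil then show ?case by (simp only: wprod.simps permutes_id)
next
  case (Cons i js)
  then have "wprod js permutes {1..Suc n}" "sref i permutes {1..Suc n}"
    using sref_perm[of i n] by simp_all
  then show ?case by (simp only: wprod.simps permutes_compose)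
qed

lemma wprod_append: "wprod (xs @ ys) = wprod xs \<circ> wprod ys"
  by (induction xs) (auto simp: comp_assoc)

lemma T_BB:
  assumes w: "w permutes {1..Suc n}"
  shows "Tn n w \<in> BB 1 (Suc n)"
proof -
  have inj: "inj w" using w by (rule permutes_inj)
  have "bic (Tn n w)"
    unfolding bic_def
  proof (intro conjI allI impI)
    fix x y z assume "(x, y) \<in> Tn n w" "(y, z) \<in> Tn n w"
    then show "(x, z) \<in> Tn n w" by (auto simp: Tn_def)
  next
    fix x y z assume h: "(x, z) \<in> Tn n w" "x < y" "y < z"
    have "w y \<noteq> w x" using inj h(2) by (metis less_irrefl injD)
    then show "(x, y) \<in> Tn n w \<or> (y, z) \<in> Tn n w" using h by (auto simp: Tn_def)
  qed
  then show ?thesis using Tn_Prs by (simp add: BB_def)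
qed

lemma T_id: "Tn n id = {}"
  by (auto simp: Tn_def)

lemma card_less:
  assumes w: "w permutes {1..Suc n}" and x: "x \<in> {1..Suc n}"
  shows "card {y \<in> {1..Suc n}. w y < w x} = w x - 1"
proof -
  let ?S = "{1..Suc n}"
  have "w ` {y \<in> ?S. w y < w x} = {v \<in> ?S. v < w x}"
  proof
    show "w ` {y \<in> ?S. w y < w x} \<subseteq> {v \<in> ?S. v < w x}"
    proof
      fix v assume "v \<in> w ` {y \<in> ?S. w y < w x}"
      then obtain y where "y \<in> ?S" "w y < w x" "v = w y" by blast
      then show "v \<in> {v \<in> ?S. v < w x}" using permutes_in_image[OF w, of y] by simp
    qed
    show "{v \<in> ?S. v < w x} \<subseteq> w ` {y \<in> ?S. w y < w x}"
    proof
      fix v assume v: "v \<in> {v \<in> ?S. v < w x}"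
      then have "v \<in> w ` ?S" using permutes_image[OF w] by simp
      then obtain y where "y \<in> ?S" "v = w y" by blast
      then show "v \<in> w ` {y \<in> ?S. w y < w x}" using v by auto
    qed
  qed
  moreover have "inj_on w {y \<in> ?S. w y < w x}" using permutes_inj_on[OF w] .
  ultimately have "card {y \<in> ?S. w y < w x} = card {v \<in> ?S. v < w x}"
    using card_image by fastforce
  also have "{v \<in> ?S. v < w x} = {1..<w x}"
  proof -
    have "w x \<in> ?S" using permutes_in_image[OF w, of x] x by simp
    then show ?thesis by auto
  qed
  finally show ?thesis by simp
qed

lemma T_inj:
  assumes w: "w permutes {1..Suc n}" and u: "u permutes {1..Suc n}" and T: "Tn n w = Tn n u"
  shows "w = u"
proof
  fix x
  let ?S = "{1..Suc n}"
  show "w x = u x"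
  proof (cases "x \<in> ?S")
    case False
    then show ?thesis using permutes_not_in[OF w] permutes_not_in[OF u] by simp
  next
    case True
    have L: "{y \<in> ?S. v y < v x} = {y \<in> ?S. (y < x \<and> (y,x) \<notin> Tn n v) \<or> (x < y \<and> (x,y) \<in> Tn n v)}"
      if v: "v permutes ?S" for v
    proof -
      have "v y < v x \<longleftrightarrow> (y < x \<and> (y,x) \<notin> Tn n v) \<or> (x < y \<and> (x,y) \<in> Tn n v)" if "y \<in> ?S" for y
      proof -
        have "y \<noteq> x \<Longrightarrow> v y \<noteq> v x" using permutes_inj[OF v] by (metis injD)
        then show ?thesis using that True by (cases "y = x") (auto simp: Tn_def)
      qed
      then show ?thesis by auto
    qed
    have "w x - 1 = u x - 1"
      using card_less[OF w True] card_less[OF u True] L[OF w] L[OF u] T by simp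
    moreover have "w x \<ge> 1" "u x \<ge> 1"
      using permutes_in_image[OF w] permutes_in_image[OF u] True by auto
    ultimately show ?thesis by simp
  qed
qed

lemma sw_less:
  assumes "\<not> (u = i \<and> v = Suc i)" "\<not> (u = Suc i \<and> v = i)"
  shows "sref i u < sref i v \<longleftrightarrow> u < v"
  using assms unfolding sref_def transpose_def by auto

lemma T_swap_same:
  assumes "\<not> ((w x = i \<and> w y = Suc i) \<or> (w x = Suc i \<and> w y = i))"
  shows "(x,y) \<in> Tn n (sref i \<circ> w) \<longleftrightarrow> (x,y) \<in> Tn n w"
  using sw_less[of "w y" i "w x"] assms by (auto simp: Tn_def)



lemma card_K:
  assumes fA: "finite A" and fB: "finite B"
    and same: "\<And>p. p \<notin> K \<Longrightarrow> (p \<in> A \<longleftrightarrow> p \<in> B)"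
    and sub: "\<And>p q. p \<in> K \<Longrightarrow> q \<in> K \<Longrightarrow> p = q"
  shows "card A \<le> card B + 1 \<and> (card A = card B + 1 \<longrightarrow> B \<subseteq> A)"
proof (cases "K = {}")
  case True
  then have "A = B" using same by auto
  then show ?thesis by simp
next
  case False
  then obtain k where k: "k \<in> K" by blast
  then have Kk: "K = {k}" using sub by auto
  have AB: "A - {k} = B - {k}" using same Kk by auto
  have cA: "card A \<le> card (A - {k}) + 1" 
  proof (cases "k \<in> A")
    case True then show ?thesis using fA card_Diff1_less[OF fA True] by simp
  qed simp
  have cB: "card (B - {k}) \<le> card B" by (rule card_Diff1_le)
  show ?thesis
  proof (intro conjI impI)
    show "card A \<le> card B + 1" using cA cB AB by simp
  next
    assume eq: "card A = card B + 1"
    show "B \<subseteq> A"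
    proof
      fix p assume pB: "p \<in> B"
      show "p \<in> A"
      proof (cases "p = k")
        case False then show ?thesis using AB pB by blast
      next
        case True
        show ?thesis
        proof (rule ccontr)
          assume "p \<notin> A"
          then have "A = A - {k}" using True by auto
          moreover have "card (B - {k}) = card B - 1" using pB True fB by simp
          moreover have "card B \<ge> 1" using pB fB card_gt_0_iff[of B] by auto
          ultimately show False using eq AB by simp
        qed
      qed
    qed
  qed
qed

lemma card_step:
  assumes w: "w permutes {1..Suc n}"
  shows "card (Tn n (sref i \<circ> w)) \<le> card (Tn n w) + 1 \<and>
         (card (Tn n (sref i \<circ> w)) = card (Tn n w) + 1 \<longrightarrow> Tn n w \<subseteq> Tn n (sref i \<circ> w))"
proof (rule card_K[OF finite_Tn finite_Tn])
  let ?K = "{(x,y). x < y \<and> ((w x = i \<and> w y = Suc i) \<or> (w x = Suc i \<and> w y = i))}"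
  show "p \<notin> ?K \<Longrightarrow> (p \<in> Tn n (sref i \<circ> w)) = (p \<in> Tn n w)" for p
  proof (cases p)
    case (Pair x y)
    assume "p \<notin> ?K"
    then show ?thesis
    proof (cases "x < y")
      case True
      have "\<not> ((w x = i \<and> w y = Suc i) \<or> (w x = Suc i \<and> w y = i))" using \<open>p \<notin> ?K\<close> Pair True by simp
      then show ?thesis using T_swap_same[of w x i y n] Pair by simp
    next
      case False
      then show ?thesis using Pair by (auto simp: Tn_def)
    qed
  qed
  have inj: "inj w" using w by (rule permutes_inj)
  show "p = q" if "p \<in> ?K" "q \<in> ?K" for p q
  proof -
    obtain x y where P1: "p = (x,y)" by (cases p)
    obtain x' y' where P2: "q = (x',y')" by (cases q)
    note P = P1 P2
    have h: "x < y" "x' < y'" "(w x = i \<and> w y = Suc i) \<or> (w x = Suc i \<and> w y = i)"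
      "(w x' = i \<and> w y' = Suc i) \<or> (w x' = Suc i \<and> w y' = i)" using that P by auto
    have e: "w a = w b \<Longrightarrow> a = b" for a b using inj by (rule injD)
    from h(3) show ?thesis
    proof
      assume A: "w x = i \<and> w y = Suc i"
      from h(4) show ?thesis
      proof
        assume "w x' = i \<and> w y' = Suc i"
        then have "x = x'" "y = y'" using A e by (metis, metis)
        then show ?thesis using P by simp
      next
        assume "w x' = Suc i \<and> w y' = i"
        then have "x = y'" "y = x'" using A e by (metis, metis)
        then show ?thesis using h(1,2) by simp
      qed
    next
      assume A: "w x = Suc i \<and> w y = i"
      from h(4) show ?thesis
      proof
        assume "w x' = Suc i \<and> w y' = i"
        then have "x = x'" "y = y'" using A e by (metis, metis)
        then show ?thesis using P by simp
      next
        assume "w x' = i \<and> w y' = Suc i"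
        then have "x = y'" "y = x'" using A e by (metis, metis)
        then show ?thesis using h(1,2) by simp
      qed
    qed
  qed
qed

lemma mono_word:
  assumes w: "w permutes {1..Suc n}" and s: "set is \<subseteq> {1..n}"
  shows "card (Tn n (wprod is \<circ> w)) \<le> card (Tn n w) + length is \<and>
    (card (Tn n (wprod is \<circ> w)) = card (Tn n w) + length is \<longrightarrow> Tn n w \<subseteq> Tn n (wprod is \<circ> w))"
  using s
proof (induction "is")
  case Nil then show ?case by simp
next
  case (Cons i js)
  let ?u = "wprod js \<circ> w"
  have u: "?u permutes {1..Suc n}" using Cons.prems wprod_perm[of js n] w permutes_compose by auto
  have IH: "card (Tn n ?u) \<le> card (Tn n w) + length js \<and>
    (card (Tn n ?u) = card (Tn n w) + length js \<longrightarrow> Tn n w \<subseteq> Tn n ?u)"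
    by (rule Cons.IH) (use Cons.prems in simp)
  have st: "card (Tn n (sref i \<circ> ?u)) \<le> card (Tn n ?u) + 1 \<and>
         (card (Tn n (sref i \<circ> ?u)) = card (Tn n ?u) + 1 \<longrightarrow> Tn n ?u \<subseteq> Tn n (sref i \<circ> ?u))"
    using card_step[OF u] .
  have eq: "wprod (i # js) \<circ> w = sref i \<circ> ?u" by (simp add: comp_assoc)
  let ?a = "card (Tn n (sref i \<circ> ?u))" and ?b = "card (Tn n ?u)" and ?c = "card (Tn n w)"
  have "?a \<le> ?c + Suc (length js)" using IH st by linarith
  moreover have "Tn n w \<subseteq> Tn n (sref i \<circ> ?u)" if "?a = ?c + Suc (length js)"
  proof -
    have "?b = ?c + length js" "?a = ?b + 1" using IH st that by linarith+
    then show ?thesis using IH st by blast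
  qed
  ultimately show ?case unfolding eq length_Cons by blast
qed

lemma step_up:
  assumes w: "w permutes {1..Suc n}" and X: "X \<in> BB 1 (Suc n)"
    and sub: "Tn n w \<subseteq> X" and ne: "Tn n w \<noteq> X"
  shows "\<exists>i p. i \<in> {1..n} \<and> p \<in> X \<and> p \<notin> Tn n w \<and> Tn n (sref i \<circ> w) = insert p (Tn n w)"
proof -
  let ?S = "{1..Suc n}"
  have inj: "inj w" using w by (rule permutes_inj)
  have e: "w a = w b \<Longrightarrow> a = b" for a b using inj by (rule injD)
  have XP: "X \<subseteq> Prs 1 (Suc n)" and bX: "bic X" using X by (auto simp: BB_def)
  have cl: "(a,b) \<in> X \<Longrightarrow> (b,c) \<in> X \<Longrightarrow> (a,c) \<in> X" for a b c using bX by (auto simp: bic_def)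
  have co: "(a,c) \<in> X \<Longrightarrow> a < b \<Longrightarrow> b < c \<Longrightarrow> (a,b) \<in> X \<or> (b,c) \<in> X" for a b c using bX by (auto simp: bic_def)
  obtain p0 where "p0 \<in> X - Tn n w" using sub ne by blast
  then obtain p where p: "p \<in> X - Tn n w" and pmin: "\<And>q. q \<in> X - Tn n w \<Longrightarrow> w (snd p) - w (fst p) \<le> w (snd q) - w (fst q)"
    using ex_has_least_nat[of "\<lambda>q. q \<in> X - Tn n w" p0 "\<lambda>q. w (snd q) - w (fst q)"] by blast
  obtain x y where xy: "p = (x,y)" by (cases p)
  have inX: "(x,y) \<in> X" and nT: "(x,y) \<notin> Tn n w" using p xy by auto
  have rng: "1 \<le> x" "x < y" "y \<le> Suc n" using inX XP by (auto simp: Prs_def)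
  have wxy: "w x < w y"
  proof -
    have "w x \<noteq> w y" using e rng(2) by auto
    moreover have "\<not> w y < w x" using nT rng by (auto simp: Tn_def)
    ultimately show ?thesis by simp
  qed
  have mn: "\<And>a b. (a,b) \<in> X \<Longrightarrow> (a,b) \<notin> Tn n w \<Longrightarrow> w y - w x \<le> w b - w a"
    using pmin xy by fastforce
  have wS: "w a \<in> ?S" if "a \<in> ?S" for a using permutes_in_image[OF w] that by simp
  have adj: "w y = Suc (w x)"
  proof (rule ccontr)
    assume na: "w y \<noteq> Suc (w x)"
    define v where "v = Suc (w x)"
    have vlt: "v < w y" using na wxy v_def by simp
    have wyS: "w y \<in> ?S" using wS rng by simp
    have vS: "v \<in> ?S" using vlt wyS v_def by auto
    define z where "z = inv w v"
    have wz: "w z = v" using permutes_inverses(1)[OF w] z_def by simp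
    have zS: "z \<in> ?S" using permutes_in_image[OF w, of z] wz vS by simp
    have zx: "z \<noteq> x" using wz v_def by auto
    have zy: "z \<noteq> y" using wz vlt by auto
    consider "z < x" | "x < z \<and> z < y" | "y < z" using zx zy by linarith
    then show False
    proof cases
      case 1
      have "(z,x) \<in> Tn n w" using 1 zS rng wz v_def by (auto simp: Tn_def)
      then have "(z,x) \<in> X" using sub by blast
      then have zyX: "(z,y) \<in> X" using cl inX by blast
      have "(z,y) \<notin> Tn n w" using vlt wz by (auto simp: Tn_def)
      then have "w y - w x \<le> w y - w z" using mn zyX by blast
      then show False using wz v_def vlt by simp
    next
      case 2
      then have "(x,z) \<in> X \<or> (z,y) \<in> X" using co inX by blast
      moreover have "(x,z) \<notin> Tn n w" "(z,y) \<notin> Tn n w" using wz v_def vlt by (auto simp: Tn_def)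
      ultimately have "w y - w x \<le> w z - w x \<or> w y - w x \<le> w y - w z" using mn by blast
      then show False using wz v_def vlt by auto
    next
      case 3
      have "(y,z) \<in> Tn n w" using 3 zS rng wz vlt by (auto simp: Tn_def)
      then have "(y,z) \<in> X" using sub by blast
      then have xzX: "(x,z) \<in> X" using cl inX by blast
      have "(x,z) \<notin> Tn n w" using wz v_def by (auto simp: Tn_def)
      then have "w y - w x \<le> w z - w x" using mn xzX by blast
      then show False using wz v_def vlt by simp
    qed
  qed
  define i where "i = w x"
  have iS: "i \<in> {1..n}" using wS[of x] wS[of y] rng adj i_def by auto
  have "Tn n (sref i \<circ> w) = insert (x,y) (Tn n w)"
  proof (rule set_eqI)
    fix q :: "nat \<times> nat"
    obtain a b where q: "q = (a,b)" by (cases q)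
    show "q \<in> Tn n (sref i \<circ> w) \<longleftrightarrow> q \<in> insert (x,y) (Tn n w)"
    proof (cases "q = (x,y)")
      case True
      have "sref i (w y) < sref i (w x)" using adj i_def by (simp add: sref_def)
      then show ?thesis using True rng by (auto simp: Tn_def)
    next
      case False
      show ?thesis
      proof (cases "a < b")
        case True
        have "\<not> ((w a = i \<and> w b = Suc i) \<or> (w a = Suc i \<and> w b = i))"
        proof
          assume "(w a = i \<and> w b = Suc i) \<or> (w a = Suc i \<and> w b = i)"
          then show False
          proof
            assume "w a = i \<and> w b = Suc i"
            then have "a = x" "b = y" using e i_def adj by auto
            then show False using False q by simp
          next
            assume "w a = Suc i \<and> w b = i"
            then have "a = y" "b = x" using e i_def adj by auto
            then show False using True rng by simp
          qed
        qed
        then show ?thesis using T_swap_same[of w a i b n] False q by auto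
      next
        case nt: False
        then show ?thesis using q rng by (auto simp: Tn_def)
      qed
    qed
  qed
  then show ?thesis using iS inX nT by blast
qed



lemma chain:
  assumes X: "X \<in> BB 1 (Suc n)"
  shows "\<forall>w. w permutes {1..Suc n} \<longrightarrow> Tn n w \<subseteq> X \<longrightarrow> card X - card (Tn n w) = k \<longrightarrow>
    (\<exists>is. set is \<subseteq> {1..n} \<and> length is = k \<and> Tn n (wprod is \<circ> w) = X)"
proof (induction k)
  have fX: "finite X" using X finite_Prs by (auto simp: BB_def intro: finite_subset)
  case 0
  show ?case
  proof (intro allI impI)
    fix w assume w: "w permutes {1..Suc n}" and s: "Tn n w \<subseteq> X" and c: "card X - card (Tn n w) = 0"
    have "card X \<le> card (Tn n w)" using c by simp
    then have "Tn n w = X" using s fX card_seteq by blast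
    then show "\<exists>is. set is \<subseteq> {1..n} \<and> length is = 0 \<and> Tn n (wprod is \<circ> w) = X"
      by (intro exI[of _ "[]"]) simp
  qed
next
  have fX: "finite X" using X finite_Prs by (auto simp: BB_def intro: finite_subset)
  case (Suc k)
  show ?case
  proof (intro allI impI)
    fix w assume w: "w permutes {1..Suc n}" and s: "Tn n w \<subseteq> X" and c: "card X - card (Tn n w) = Suc k"
    have ne: "Tn n w \<noteq> X" using c by auto
    obtain i p where ip: "i \<in> {1..n}" "p \<in> X" "p \<notin> Tn n w" "Tn n (sref i \<circ> w) = insert p (Tn n w)"
      using step_up[OF w X s ne] by blast
    have w': "sref i \<circ> w permutes {1..Suc n}" using w sref_perm[OF ip(1)] permutes_compose by blast
    have s': "Tn n (sref i \<circ> w) \<subseteq> X" using ip s by auto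
    have "card (Tn n (sref i \<circ> w)) = Suc (card (Tn n w))" using ip(3,4) finite_Tn by simp
    then have c': "card X - card (Tn n (sref i \<circ> w)) = k" using c by simp
    obtain js where js: "set js \<subseteq> {1..n}" "length js = k" "Tn n (wprod js \<circ> (sref i \<circ> w)) = X"
      using Suc.IH w' s' c' by blast
    have "wprod (js @ [i]) \<circ> w = wprod js \<circ> (sref i \<circ> w)" by (simp add: wprod_append comp_assoc)
    then show "\<exists>is. set is \<subseteq> {1..n} \<and> length is = Suc k \<and> Tn n (wprod is \<circ> w) = X"
      using js ip(1) by (intro exI[of _ "js @ [i]"]) auto
  qed
qed

lemma cl_eq:
  assumes w: "w permutes {1..Suc n}"
  shows "coxeter_length n w = card (Tn n w)"
  unfolding coxeter_length_def
proof (rule Least_equality)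
  have "\<exists>is. set is \<subseteq> {1..n} \<and> length is = card (Tn n w) \<and> Tn n (wprod is \<circ> id) = Tn n w"
    using chain[OF T_BB[OF w], rule_format, of id "card (Tn n w)"] by (simp add: T_id)
  then obtain "is" where i: "set is \<subseteq> {1..n}" "length is = card (Tn n w)" "Tn n (wprod is) = Tn n w" by auto
  have "wprod is = w" using T_inj[OF wprod_perm[OF i(1)] w i(3)] .
  then show "\<exists>is. set is \<subseteq> {1..n} \<and> length is = card (Tn n w) \<and> wprod is = w" using i by blast
next
  fix k assume "\<exists>is. set is \<subseteq> {1..n} \<and> length is = k \<and> wprod is = w"
  then obtain "is" where i: "set is \<subseteq> {1..n}" "length is = k" "wprod is = w" by blast
  have "card (Tn n (wprod is \<circ> id)) \<le> card (Tn n id) + length is"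
    using mono_word[OF permutes_id i(1)] by blast
  then show "card (Tn n w) \<le> k" using i by (simp add: T_id)
qed

lemma lw_iff:
  assumes w: "w \<in> Sym n" and w': "w' \<in> Sym n"
  shows "left_weak n w w' \<longleftrightarrow> Tn n w \<subseteq> Tn n w'"
proof -
  have pw: "w permutes {1..Suc n}" and pw': "w' permutes {1..Suc n}" using w w' by (auto simp: Sym_def)
  show ?thesis
  proof
    assume "left_weak n w w'"
    then obtain "is" where i: "set is \<subseteq> {1..n}" "w' = wprod is \<circ> w"
      "coxeter_length n w' = coxeter_length n w + length is" unfolding left_weak_def by blast
    have "card (Tn n (wprod is \<circ> w)) = card (Tn n w) + length is"
      using i(3) cl_eq[OF pw] cl_eq[OF pw'] i(2) by simp
    then show "Tn n w \<subseteq> Tn n w'" using mono_word[OF pw i(1)] i(2) by simp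
  next
    assume s: "Tn n w \<subseteq> Tn n w'"
    obtain "is" where i: "set is \<subseteq> {1..n}" "length is = card (Tn n w') - card (Tn n w)"
      "Tn n (wprod is \<circ> w) = Tn n w'"
      using chain[OF T_BB[OF pw'], rule_format, OF pw s refl] by blast
    have pc: "wprod is \<circ> w permutes {1..Suc n}" using wprod_perm[OF i(1)] pw permutes_compose by blast
    have e: "w' = wprod is \<circ> w" using T_inj[OF pc pw' i(3)] by simp
    have "card (Tn n w) \<le> card (Tn n w')" using s finite_Tn by (rule card_mono[rotated])
    then have "coxeter_length n w' = coxeter_length n w + length is"
      using cl_eq[OF pw] cl_eq[OF pw'] i(2) by simp
    then show "left_weak n w w'" unfolding left_weak_def using i(1) e by blast
  qed
qed

lemma T_sref:
  assumes "i \<in> {1..n}" shows "Tn n (sref i) = {(i, Suc i)}"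
proof (rule set_eqI)
  fix q :: "nat \<times> nat"
  obtain x y where q: "q = (x,y)" by (cases q)
  show "q \<in> Tn n (sref i) \<longleftrightarrow> q \<in> {(i, Suc i)}"
    using assms unfolding q Tn_def sref_def transpose_def by auto
qed



theorem proposition5p1:
  fixes n :: nat and P :: "'b set" and le :: "'b \<Rightarrow> 'b \<Rightarrow> bool"
    and \<rho> \<rho>' :: "(nat \<Rightarrow> nat) \<Rightarrow> 'b"
  assumes "partial_order_on' P le"
    and "weak_order_iso n P le \<rho>"
    and "weak_order_iso n P le \<rho>'"
    and "\<forall>i\<in>{1..n}. \<rho> (sref i) = \<rho>' (sref i)"
  shows "\<forall>w\<in>Sym n. \<rho> w = \<rho>' w"
proof -
  have b1: "bij_betw \<rho> (Sym n) P" and o1: "\<forall>w\<in>Sym n. \<forall>w'\<in>Sym n. left_weak n w w' \<longleftrightarrow> le (\<rho> w) (\<rho> w')"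
    using assms(2) by (auto simp: weak_order_iso_def)
  have b2: "bij_betw \<rho>' (Sym n) P" and o2: "\<forall>w\<in>Sym n. \<forall>w'\<in>Sym n. left_weak n w w' \<longleftrightarrow> le (\<rho>' w) (\<rho>' w')"
    using assms(3) by (auto simp: weak_order_iso_def)
  define \<sigma> where "\<sigma> u = inv_into (Sym n) \<rho>' (\<rho> u)" for u
  have rP: "\<rho> u \<in> P" if "u \<in> Sym n" for u using bij_betwE[OF b1] that by blast
  have rimg: "\<rho>' ` Sym n = P" using b2 by (simp add: bij_betw_def)
  have injr': "inj_on \<rho>' (Sym n)" using b2 by (simp add: bij_betw_def)
  have sS: "\<sigma> u \<in> Sym n" if "u \<in> Sym n" for u
    unfolding \<sigma>_def using rP[OF that] rimg by (metis inv_into_into)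
  have rs: "\<rho>' (\<sigma> u) = \<rho> u" if "u \<in> Sym n" for u
    unfolding \<sigma>_def using rP[OF that] rimg by (metis f_inv_into_f)
  have bs: "bij_betw \<sigma> (Sym n) (Sym n)"
  proof -
    have "bij_betw (inv_into (Sym n) \<rho>') P (Sym n)" using b2 by (rule bij_betw_inv_into)
    then have "bij_betw (inv_into (Sym n) \<rho>' \<circ> \<rho>) (Sym n) (Sym n)" using b1 by (rule bij_betw_trans[rotated])
    moreover have "\<sigma> = inv_into (Sym n) \<rho>' \<circ> \<rho>" by (simp add: \<sigma>_def fun_eq_iff)
    ultimately show ?thesis by simp
  qed
  have os: "left_weak n u v \<longleftrightarrow> left_weak n (\<sigma> u) (\<sigma> v)" if "u \<in> Sym n" "v \<in> Sym n" for u v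
  proof -
    have "left_weak n u v \<longleftrightarrow> le (\<rho> u) (\<rho> v)" using o1 that by blast
    also have "\<dots> \<longleftrightarrow> le (\<rho>' (\<sigma> u)) (\<rho>' (\<sigma> v))" using rs that by simp
    also have "\<dots> \<longleftrightarrow> left_weak n (\<sigma> u) (\<sigma> v)" using o2 sS that by blast
    finally show ?thesis .
  qed
  have srS: "sref i \<in> Sym n" if "i \<in> {1..n}" for i using sref_perm[OF that] by (simp add: Sym_def)
  have sfix: "\<sigma> (sref i) = sref i" if "i \<in> {1..n}" for i
    unfolding \<sigma>_def using assms(4) that srS[OF that] injr' by (simp add: inv_into_f_f)
  let ?B = "BB 1 (Suc n)"
  have TS: "Tn n u \<in> ?B" if "u \<in> Sym n" for u using that T_BB by (simp add: Sym_def)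
  have bT: "bij_betw (Tn n) (Sym n) ?B"
    unfolding bij_betw_def
  proof
    show "inj_on (Tn n) (Sym n)" by (rule inj_onI) (use T_inj in \<open>auto simp: Sym_def\<close>)
    show "Tn n ` Sym n = ?B"
    proof
      show "Tn n ` Sym n \<subseteq> ?B" using TS by blast
      show "?B \<subseteq> Tn n ` Sym n"
      proof
        fix X assume X: "X \<in> ?B"
        obtain "is" where i: "set is \<subseteq> {1..n}" "Tn n (wprod is \<circ> id) = X"
          using chain[OF X, rule_format, of id "card X"] by (auto simp: T_id)
        have "wprod is \<in> Sym n" using wprod_perm[OF i(1)] by (simp add: Sym_def)
        then show "X \<in> Tn n ` Sym n" using i by auto
      qed
    qed
  qed
  define \<Phi> where "\<Phi> X = Tn n (\<sigma> (inv_into (Sym n) (Tn n) X))" for X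
  have invS: "inv_into (Sym n) (Tn n) X \<in> Sym n" "Tn n (inv_into (Sym n) (Tn n) X) = X" if "X \<in> ?B" for X
  proof -
    have "X \<in> Tn n ` Sym n" using that bT by (simp add: bij_betw_def)
    then show "inv_into (Sym n) (Tn n) X \<in> Sym n" "Tn n (inv_into (Sym n) (Tn n) X) = X"
      by (rule inv_into_into, rule f_inv_into_f)
  qed
  have injT: "inj_on (Tn n) (Sym n)" using bT by (simp add: bij_betw_def)
  have good: "good 1 (Suc n) \<Phi>"
    unfolding good_def
  proof (intro conjI)
    have "bij_betw (inv_into (Sym n) (Tn n)) ?B (Sym n)" using bT by (rule bij_betw_inv_into)
    then have "bij_betw (\<sigma> \<circ> inv_into (Sym n) (Tn n)) ?B (Sym n)" using bs by (rule bij_betw_trans)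
    then have "bij_betw (Tn n \<circ> (\<sigma> \<circ> inv_into (Sym n) (Tn n))) ?B ?B" using bT by (rule bij_betw_trans)
    moreover have "\<Phi> = Tn n \<circ> (\<sigma> \<circ> inv_into (Sym n) (Tn n))" by (simp add: \<Phi>_def fun_eq_iff)
    ultimately show "bij_betw \<Phi> ?B ?B" by simp
    show "\<forall>X\<in>?B. \<forall>Y\<in>?B. X \<subseteq> Y \<longleftrightarrow> \<Phi> X \<subseteq> \<Phi> Y"
    proof (intro ballI)
      fix X Y assume X: "X \<in> ?B" and Y: "Y \<in> ?B"
      let ?u = "inv_into (Sym n) (Tn n) X" and ?v = "inv_into (Sym n) (Tn n) Y"
      have "X \<subseteq> Y \<longleftrightarrow> Tn n ?u \<subseteq> Tn n ?v" using invS X Y by simp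
      also have "\<dots> \<longleftrightarrow> left_weak n ?u ?v" using lw_iff invS X Y by simp
      also have "\<dots> \<longleftrightarrow> left_weak n (\<sigma> ?u) (\<sigma> ?v)" using os invS X Y by simp
      also have "\<dots> \<longleftrightarrow> Tn n (\<sigma> ?u) \<subseteq> Tn n (\<sigma> ?v)" using lw_iff invS X Y sS by simp
      finally show "X \<subseteq> Y \<longleftrightarrow> \<Phi> X \<subseteq> \<Phi> Y" by (simp add: \<Phi>_def)
    qed
    show "fixat 1 (Suc n) \<Phi>"
      unfolding fixat_def
    proof (intro allI impI)
      fix i assume "1 \<le> i" "i < Suc n"
      then have i: "i \<in> {1..n}" by simp
      have "inv_into (Sym n) (Tn n) (Tn n (sref i)) = sref i" using injT srS[OF i] by (simp add: inv_into_f_f)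
      then show "\<Phi> {(i, Suc i)} = {(i, Suc i)}" using T_sref[OF i] sfix[OF i] by (simp add: \<Phi>_def)
    qed
  qed
  show ?thesis
  proof
    fix w assume w: "w \<in> Sym n"
    have "\<Phi> (Tn n w) = Tn n w" using rigid[OF good TS[OF w]] .
    moreover have "inv_into (Sym n) (Tn n) (Tn n w) = w" using injT w by (simp add: inv_into_f_f)
    ultimately have "Tn n (\<sigma> w) = Tn n w" by (simp add: \<Phi>_def)
    then have "\<sigma> w = w" using injT sS[OF w] w by (meson inj_onD)
    then show "\<rho> w = \<rho>' w" using rs[OF w] by simp
  qed
qed


end
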